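(* Let $G$ and $H$ be finite simple connected graphs with $|V(G)|>1$, and let $L$ be a non-empty subset of $V(G)$. If $\mathscr{C}(G\circ_L H)$ is an accessible set system, then $\mathscr{C}(H)$ is an accessible set system.
   Context: For a graph $\Gamma$ and $A\subseteq V(\Gamma)$, $\omega(\Gamma\setminus A)$ is the number of connected components of the induced subgraph on $V(\Gamma)\setminus A$. A subset $T\subseteq V(\Gamma)$ is a cutset if $T=\emptyset$ or, for every $v\in T$, $\omega(\Gamma\setminus (T\setminus\{v\}))<\omega(\Gamma\setminus T)$; $\mathscr{C}(\Gamma)$ is the set of cutsets. $\mathscr{C}(\Gamma)$ is an accessible set system if for every non-empty $T\in\mathscr{C}(\Gamma)$ there is $t\in T$ with $T\setminus\{t\}\in\mathscr{C}(\Gamma)$. For a non-empty $L\subseteq V(G)$, $G\circ_L H$ is the graph obtained from $G$ by taking, for each $v\in L$, a disjoint copy $H_v$ of $H$ and joining $v$ to every vertex of $H_v$. *)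

theory Defs
  imports Main
begin

definition simple_graph :: "'a set \<Rightarrow> 'a set set \<Rightarrow> bool" where
  "simple_graph V E \<longleftrightarrow> finite V \<and>
     (\<forall>e\<in>E. \<exists>u v. u \<noteq> v \<and> e = {u, v} \<and> u \<in> V \<and> v \<in> V)"

definition reach_in :: "'a set set \<Rightarrow> 'a set \<Rightarrow> 'a \<Rightarrow> 'a \<Rightarrow> bool" where
  "reach_in E S u w \<longleftrightarrow> u \<in> S \<and> w \<in> S \<and>
     (u, w) \<in> {(x, y). x \<in> S \<and> y \<in> S \<and> {x, y} \<in> E}\<^sup>*"

definition connected_graph :: "'a set \<Rightarrow> 'a set set \<Rightarrow> bool" where
  "connected_graph V E \<longleftrightarrow> V \<noteq> {} \<and> (\<forall>u\<in>V. \<forall>w\<in>V. reach_in E V u w)"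

definition num_comp :: "'a set \<Rightarrow> 'a set set \<Rightarrow> 'a set \<Rightarrow> nat" where
  "num_comp V E A = card {C. \<exists>v \<in> V - A. C = {w. reach_in E (V - A) v w}}"

definition is_cutset :: "'a set \<Rightarrow> 'a set set \<Rightarrow> 'a set \<Rightarrow> bool" where
  "is_cutset V E T \<longleftrightarrow> T \<subseteq> V \<and>
     (T = {} \<or> (\<forall>v\<in>T. num_comp V E (T - {v}) < num_comp V E T))"

definition cutsets :: "'a set \<Rightarrow> 'a set set \<Rightarrow> 'a set set" where
  "cutsets V E = {T. is_cutset V E T}"

definition accessible :: "'a set set \<Rightarrow> bool" where
  "accessible \<F> \<longleftrightarrow> (\<forall>T\<in>\<F>. T \<noteq> {} \<longrightarrow> (\<exists>t\<in>T. T - {t} \<in> \<F>))"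

text \<open>The graph G \<circ>_L H: vertex Inl v for v in V(G), vertex Inr (v,h) for the copy of
  h in H_v (v in L).\<close>
definition corona_V :: "'a set \<Rightarrow> 'a set \<Rightarrow> 'b set \<Rightarrow> ('a + 'a \<times> 'b) set" where
  "corona_V VG L VH = Inl ` VG \<union> Inr ` (L \<times> VH)"

definition corona_E :: "'a set set \<Rightarrow> 'a set \<Rightarrow> 'b set \<Rightarrow> 'b set set
    \<Rightarrow> ('a + 'a \<times> 'b) set set" where
  "corona_E EG L VH EH =
     (\<lambda>e. Inl ` e) ` EG
   \<union> {(\<lambda>h. Inr (v, h)) ` e | v e. v \<in> L \<and> e \<in> EH}
   \<union> {{Inl v, Inr (v, h)} | v h. v \<in> L \<and> h \<in> VH}"

end

theory Submission
  imports Defs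
begin
definition comps :: "'a set set \<Rightarrow> 'a set \<Rightarrow> 'a set set" where
  "comps E S = {C. \<exists>v \<in> S. C = {w. reach_in E S v w}}"

lemma num_comp_comps: "num_comp V E A = card (comps E (V - A))"
  unfolding num_comp_def comps_def by simp

lemma reach_refl: "x \<in> S \<Longrightarrow> reach_in E S x x"
  unfolding reach_in_def by simp

lemma reach_sym: assumes "reach_in E S u w" shows "reach_in E S w u"
proof -
  let ?R = "{(x, y). x \<in> S \<and> y \<in> S \<and> {x, y} \<in> E}"
  have "sym ?R" unfolding sym_def by (auto simp: insert_commute)
  hence "sym (?R\<^sup>*)" by (rule sym_rtrancl)
  thus ?thesis using assms unfolding reach_in_def by (auto dest: symD)
qed

lemma reach_trans: "reach_in E S u w \<Longrightarrow> reach_in E S w x \<Longrightarrow> reach_in E S u x"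
  unfolding reach_in_def by auto

lemma reach_edge: "x \<in> S \<Longrightarrow> y \<in> S \<Longrightarrow> {x,y} \<in> E \<Longrightarrow> reach_in E S x y"
  unfolding reach_in_def by auto

lemma reach_mono: assumes "S \<subseteq> S'" "reach_in E S u w" shows "reach_in E S' u w"
proof -
  have "{(x, y). x \<in> S \<and> y \<in> S \<and> {x, y} \<in> E} \<subseteq> {(x, y). x \<in> S' \<and> y \<in> S' \<and> {x, y} \<in> E}"
    using assms(1) by auto
  thus ?thesis using assms unfolding reach_in_def by (meson rtrancl_mono subsetD)
qed

lemma comps_sub: "C \<in> comps E S \<Longrightarrow> C \<subseteq> S"
  unfolding comps_def reach_in_def by auto

lemma finite_comps: "finite S \<Longrightarrow> finite (comps E S)"
  by (rule finite_subset[of _ "Pow S"]) (auto dest: comps_sub)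

lemma reach_stay:
  assumes noedge: "\<forall>x\<in>A. \<forall>y\<in>B. {x,y} \<notin> E"
    and "(x, w) \<in> {(x, y). x \<in> A \<union> B \<and> y \<in> A \<union> B \<and> {x, y} \<in> E}\<^sup>*" and "x \<in> A"
  shows "w \<in> A \<and> (x, w) \<in> {(x, y). x \<in> A \<and> y \<in> A \<and> {x, y} \<in> E}\<^sup>*"
  using assms(2,3)
proof (induction rule: rtrancl_induct)
  case base thus ?case by simp
next
  case (step y z)
  hence "z \<in> A" using noedge by auto
  with step show ?case by (auto intro: rtrancl_into_rtrancl)
qed

lemma reach_split:
  assumes "\<forall>x\<in>A. \<forall>y\<in>B. {x,y} \<notin> E" "x \<in> A"
  shows "reach_in E (A \<union> B) x w = reach_in E A x w"
proof
  assume "reach_in E (A \<union> B) x w"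
  hence "(x, w) \<in> {(x, y). x \<in> A \<union> B \<and> y \<in> A \<union> B \<and> {x, y} \<in> E}\<^sup>*"
    unfolding reach_in_def by simp
  from reach_stay[OF assms(1) this assms(2)] show "reach_in E A x w"
    unfolding reach_in_def using assms(2) by simp
next
  assume "reach_in E A x w" thus "reach_in E (A \<union> B) x w"
    by (rule reach_mono[rotated]) simp
qed

lemma comps_split:
  assumes "\<forall>x\<in>A. \<forall>y\<in>B. {x,y} \<notin> E"
  shows "comps E (A \<union> B) = comps E A \<union> comps E B"
proof -
  have B: "\<forall>x\<in>B. \<forall>y\<in>A. {x,y} \<notin> E"
  proof (intro ballI)
    fix x y assume "x \<in> B" "y \<in> A"
    moreover have "{x,y} = {y,x}" by (rule insert_commute)
    ultimately show "{x,y} \<notin> E" using assms by simp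
  qed
  have hA: "x \<in> A \<Longrightarrow> {w. reach_in E (A \<union> B) x w} = {w. reach_in E A x w}" for x
    using reach_split[OF assms, of x] by simp
  have hB: "x \<in> B \<Longrightarrow> {w. reach_in E (A \<union> B) x w} = {w. reach_in E B x w}" for x
    using reach_split[OF B, of x] by (simp add: Un_commute)
  show ?thesis
  proof (intro equalityI subsetI)
    fix C assume "C \<in> comps E (A \<union> B)"
    then obtain x where x: "x \<in> A \<union> B" "C = {w. reach_in E (A \<union> B) x w}"
      unfolding comps_def by blast
    show "C \<in> comps E A \<union> comps E B"
    proof (cases "x \<in> A")
      case True thus ?thesis using x hA unfolding comps_def by blast
    next
      case False hence "x \<in> B" using x by blast
      thus ?thesis using x hB unfolding comps_def by blast
    qed
  next
    fix C assume "C \<in> comps E A \<union> comps E B"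
    thus "C \<in> comps E (A \<union> B)"
    proof
      assume "C \<in> comps E A"
      then obtain x where x: "x \<in> A" "C = {w. reach_in E A x w}" unfolding comps_def by blast
      thus ?thesis using hA[of x] unfolding comps_def by blast
    next
      assume "C \<in> comps E B"
      then obtain x where x: "x \<in> B" "C = {w. reach_in E B x w}" unfolding comps_def by blast
      thus ?thesis using hB[of x] unfolding comps_def by blast
    qed
  qed
qed

lemma card_comps_split:
  assumes "\<forall>x\<in>A. \<forall>y\<in>B. {x,y} \<notin> E" "A \<inter> B = {}" "finite A" "finite B"
  shows "card (comps E (A \<union> B)) = card (comps E A) + card (comps E B)"
proof -
  have "comps E A \<inter> comps E B = {}"
  proof (rule ccontr)
    assume "comps E A \<inter> comps E B \<noteq> {}"
    then obtain C where C: "C \<in> comps E A" "C \<in> comps E B" by blast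
    then obtain x where "x \<in> A" "C = {w. reach_in E A x w}" unfolding comps_def by blast
    hence "x \<in> C" by (simp add: reach_refl)
    with C comps_sub assms(2) show False by blast
  qed
  thus ?thesis using comps_split[OF assms(1)]
    card_Un_disjoint[OF finite_comps[OF assms(3)] finite_comps[OF assms(4)]] by simp
qed

lemma reach_map:
  assumes inj: "inj_on f S" and ed: "\<forall>x\<in>S. \<forall>y\<in>S. ({f x, f y} \<in> E') = ({x,y} \<in> E)"
    and "x \<in> S" "y \<in> S"
  shows "reach_in E' (f ` S) (f x) (f y) = reach_in E S x y"
proof
  assume "reach_in E S x y"
  hence "(x, y) \<in> {(x, y). x \<in> S \<and> y \<in> S \<and> {x, y} \<in> E}\<^sup>*" unfolding reach_in_def by simp
  hence "(f x, f y) \<in> {(x, y). x \<in> f ` S \<and> y \<in> f ` S \<and> {x, y} \<in> E'}\<^sup>*"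
  proof (induction rule: rtrancl_induct)
    case base thus ?case by simp
  next
    case (step y z)
    hence "(f y, f z) \<in> {(x, y). x \<in> f ` S \<and> y \<in> f ` S \<and> {x, y} \<in> E'}" using ed by auto
    with step show ?case by (meson rtrancl_into_rtrancl)
  qed
  thus "reach_in E' (f ` S) (f x) (f y)" using assms unfolding reach_in_def by auto
next
  assume "reach_in E' (f ` S) (f x) (f y)"
  hence "(f x, f y) \<in> {(x, y). x \<in> f ` S \<and> y \<in> f ` S \<and> {x, y} \<in> E'}\<^sup>*" unfolding reach_in_def by simp
  hence "\<forall>z\<in>S. f y = f z \<longrightarrow> (x, z) \<in> {(x, y). x \<in> S \<and> y \<in> S \<and> {x, y} \<in> E}\<^sup>*"
  proof (induction "f y" arbitrary: y rule: rtrancl_induct)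
    case base thus ?case using inj \<open>x \<in> S\<close> by (auto dest: inj_onD)
  next
    case (step b y)
    from step(1) obtain u where u: "u \<in> S" "b = f u"
      using step(2) by blast
    show ?case
    proof (intro ballI impI)
      fix z assume z: "z \<in> S" "f y = f z"
      have ih: "(x, u) \<in> {(x, y). x \<in> S \<and> y \<in> S \<and> {x, y} \<in> E}\<^sup>*" using step(3)[of u] u by simp
      have "{f u, f z} \<in> E'" using step(2) u z by simp
      hence "{u, z} \<in> E" using ed u z by simp
      with ih u z show "(x, z) \<in> {(x, y). x \<in> S \<and> y \<in> S \<and> {x, y} \<in> E}\<^sup>*"
        by (auto intro: rtrancl_into_rtrancl)
    qed
  qed
  thus "reach_in E S x y" using assms unfolding reach_in_def by auto
qed

lemma card_comps_map:
  assumes inj: "inj_on f S" and ed: "\<forall>x\<in>S. \<forall>y\<in>S. ({f x, f y} \<in> E') = ({x,y} \<in> E)"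
  shows "card (comps E' (f ` S)) = card (comps E S)"
proof -
  have "comps E' (f ` S) = image f ` comps E S"
  proof -
    have "x \<in> S \<Longrightarrow> {w. reach_in E' (f ` S) (f x) w} = f ` {w. reach_in E S x w}" for x
    proof -
      assume x: "x \<in> S"
      have "w \<in> {w. reach_in E' (f ` S) (f x) w} \<longleftrightarrow> w \<in> f ` {w. reach_in E S x w}" for w
      proof
        assume "w \<in> {w. reach_in E' (f ` S) (f x) w}"
        hence r: "reach_in E' (f ` S) (f x) w" by simp
        then obtain y where "y \<in> S" "w = f y" unfolding reach_in_def by auto
        thus "w \<in> f ` {w. reach_in E S x w}" using r reach_map[OF inj ed x] by auto
      next
        assume "w \<in> f ` {w. reach_in E S x w}"
        then obtain y where "reach_in E S x y" "w = f y" by auto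
        moreover hence "y \<in> S" unfolding reach_in_def by auto
        ultimately show "w \<in> {w. reach_in E' (f ` S) (f x) w}" using reach_map[OF inj ed x] by auto
      qed
      thus ?thesis by blast
    qed
    thus ?thesis unfolding comps_def by (auto simp: image_iff)
  qed
  moreover have "inj_on (image f) (comps E S)"
    using inj_on_image_Pow[OF inj] by (rule inj_on_subset) (auto dest: comps_sub)
  ultimately show ?thesis by (simp add: card_image)
qed

lemma K1:
  assumes v: "v \<in> L" and fin: "finite VG" "finite VH" and L: "L \<subseteq> VG"
  shows "num_comp (corona_V VG L VH) (corona_E EG L VH EH) (insert (Inl v) ((\<lambda>h. Inr (v,h)) ` S))
    = card (comps (corona_E EG L VH EH) (corona_V VG L VH - {Inl v} - (\<lambda>h. Inr (v,h)) ` VH))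
      + num_comp VH EH S"
proof -
  let ?V = "corona_V VG L VH" and ?E = "corona_E EG L VH EH"
  let ?A = "?V - {Inl v} - (\<lambda>h. Inr (v,h)) ` VH"
  let ?f = "\<lambda>h. Inr (v,h) :: 'a + 'a \<times> 'b"
  let ?B = "?f ` (VH - S)"
  have eq: "?V - insert (Inl v) (?f ` S) = ?A \<union> ?B"
    using v unfolding corona_V_def by auto
  have ne: "\<forall>x\<in>?A. \<forall>y\<in>?B. {x,y} \<notin> ?E"
  proof (intro ballI notI)
    fix x y assume x: "x \<in> ?A" and y: "y \<in> ?B" and e: "{x,y} \<in> ?E"
    from y obtain h where h: "y = Inr (v,h)" by auto
    from e show False unfolding corona_E_def
    proof (elim UnE)
      assume "{x,y} \<in> (\<lambda>e. Inl ` e) ` EG" thus False using h by (auto simp: doubleton_eq_iff)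
    next
      assume "{x,y} \<in> {(\<lambda>h. Inr (v, h)) ` e | v e. v \<in> L \<and> e \<in> EH}"
      then obtain w e where "{x,y} = (\<lambda>h. Inr (w, h)) ` e" "e \<in> EH" by blast
      hence "x \<in> (\<lambda>h. Inr (w, h)) ` e" "y \<in> (\<lambda>h. Inr (w, h)) ` e" by auto
      thus False using h x unfolding corona_V_def by auto
    next
      assume "{x,y} \<in> {{Inl v, Inr (v, h)} | v h. v \<in> L \<and> h \<in> VH}"
      then obtain w h' where "{x,y} = {Inl w, Inr (w, h')}" by blast
      thus False using h x by (auto simp: doubleton_eq_iff)
    qed
  qed
  have dj: "?A \<inter> ?B = {}" by auto
  have finL: "finite L" using L fin(1) by (rule finite_subset)
  have finV: "finite ?V" unfolding corona_V_def using fin finL by simp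
  have fA: "finite ?A" using finV by auto
  have fB: "finite ?B" using fin by auto
  have inj: "inj_on ?f (VH - S)" by (auto simp: inj_on_def)
  have ed: "\<forall>x\<in>VH - S. \<forall>y\<in>VH - S. ({?f x, ?f y} \<in> ?E) = ({x,y} \<in> EH)"
  proof (intro ballI)
    fix x y assume x: "x \<in> VH - S" and y: "y \<in> VH - S"
    show "({?f x, ?f y} \<in> ?E) = ({x,y} \<in> EH)"
    proof
      assume xy: "{x,y} \<in> EH"
      have "?f ` {x,y} \<in> {(\<lambda>h. Inr (v, h)) ` e | v e. v \<in> L \<and> e \<in> EH}"
        using v xy by blast
      thus "{?f x, ?f y} \<in> ?E" unfolding corona_E_def by simp
    next
      assume "{?f x, ?f y} \<in> ?E"
      thus "{x,y} \<in> EH" unfolding corona_E_def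
      proof (elim UnE)
        assume "{?f x, ?f y} \<in> (\<lambda>e. Inl ` e) ` EG" thus ?thesis by auto
      next
        assume "{?f x, ?f y} \<in> {(\<lambda>h. Inr (v, h)) ` e | v e. v \<in> L \<and> e \<in> EH}"
        then obtain w e where we: "{?f x, ?f y} = (\<lambda>h. Inr (w, h)) ` e" "e \<in> EH" by blast
        have "?f x \<in> (\<lambda>h. Inr (w,h)) ` e" using we(1) by blast
        hence "w = v" by auto
        hence "?f ` {x,y} = ?f ` e" using we(1) by simp
        moreover have "inj ?f" by (auto simp: inj_def)
        ultimately have "e = {x,y}" by (metis inj_image_eq_iff)
        thus ?thesis using we by simp
      next
        assume "{?f x, ?f y} \<in> {{Inl v, Inr (v, h)} | v h. v \<in> L \<and> h \<in> VH}"
        thus ?thesis by (auto simp: doubleton_eq_iff)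
      qed
    qed
  qed
  have "num_comp ?V ?E (insert (Inl v) (?f ` S)) = card (comps ?E (?A \<union> ?B))"
    by (simp add: num_comp_comps eq)
  also have "\<dots> = card (comps ?E ?A) + card (comps ?E ?B)"
    by (rule card_comps_split[OF ne dj fA fB])
  also have "card (comps ?E ?B) = card (comps EH (VH - S))"
    by (rule card_comps_map[OF inj ed])
  finally show ?thesis by (simp add: num_comp_comps)
qed

lemma K2:
  assumes v: "v \<in> L" and L: "L \<subseteq> VG" and con: "connected_graph VG EG"
  shows "num_comp (corona_V VG L VH) (corona_E EG L VH EH) ((\<lambda>h. Inr (v,h)) ` S) = 1"
proof -
  let ?V = "corona_V VG L VH" and ?E = "corona_E EG L VH EH"
  let ?W = "?V - (\<lambda>h. Inr (v,h)) ` S"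
  have IW: "Inl ` VG \<subseteq> ?W" unfolding corona_V_def by auto
  have inj: "inj_on Inl VG" by simp
  have ed: "\<forall>x\<in>VG. \<forall>y\<in>VG. ({Inl x, Inl y} \<in> ?E) = ({x,y} \<in> EG)"
  proof (intro ballI)
    fix x y assume "x \<in> VG" "y \<in> VG"
    show "({Inl x, Inl y} \<in> ?E) = ({x,y} \<in> EG)"
    proof
      assume "{x,y} \<in> EG"
      hence "Inl ` {x,y} \<in> (\<lambda>e. Inl ` e) ` EG" by (rule imageI)
      hence "{Inl x, Inl y} \<in> (\<lambda>e. Inl ` e) ` EG" by simp
      thus "{Inl x, Inl y} \<in> ?E" unfolding corona_E_def by (intro UnI1)
    next
      assume "{Inl x, Inl y :: 'a + 'a \<times> 'b} \<in> ?E"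
      thus "{x,y} \<in> EG" unfolding corona_E_def
      proof (elim UnE)
        assume "{Inl x, Inl y :: 'a + 'a \<times> 'b} \<in> (\<lambda>e. Inl ` e) ` EG"
        thus ?thesis
        proof (rule imageE)
          fix e assume e: "{Inl x, Inl y :: 'a + 'a \<times> 'b} = Inl ` e" "e \<in> EG"
          have "Inl ` {x,y} = (Inl ` e :: ('a + 'a \<times> 'b) set)" unfolding e(1)[symmetric] by simp
          hence "{x,y} = e" by (rule inj_image_eq_iff[OF inj_Inl, THEN iffD1])
          thus ?thesis using e(2) by simp
        qed
      next
        assume "{Inl x, Inl y :: 'a + 'a \<times> 'b} \<in> {(\<lambda>h. Inr (v, h)) ` e | v e. v \<in> L \<and> e \<in> EH}"
        then obtain w e where "{Inl x, Inl y} = (\<lambda>h. Inr (w, h) :: 'a + 'a \<times> 'b) ` e" by blast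
        hence "Inl x \<in> (\<lambda>h. Inr (w, h) :: 'a + 'a \<times> 'b) ` e" by blast
        thus ?thesis by auto
      next
        assume "{Inl x, Inl y :: 'a + 'a \<times> 'b} \<in> {{Inl v, Inr (v, h)} | v h. v \<in> L \<and> h \<in> VH}"
        thus ?thesis by (auto simp: doubleton_eq_iff)
      qed
    qed
  qed
  have vG: "v \<in> VG" using v L by auto
  have rG: "reach_in ?E ?W (Inl u) (Inl v)" if u: "u \<in> VG" for u
  proof -
    have "reach_in EG VG u v" using con u vG unfolding connected_graph_def by auto
    hence "reach_in ?E (Inl ` VG) (Inl u) (Inl v)" using reach_map[OF inj ed u vG] by simp
    thus ?thesis by (rule reach_mono[OF IW])
  qed
  have rall: "reach_in ?E ?W x (Inl v)" if x: "x \<in> ?W" for x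
  proof (cases x)
    case (Inl u)
    thus ?thesis using x rG unfolding corona_V_def by auto
  next
    case (Inr p)
    then obtain u h where p: "x = Inr (u,h)" "u \<in> L" "h \<in> VH" using x unfolding corona_V_def by auto
    have "{Inl u, Inr (u,h)} \<in> {{Inl v, Inr (v, h)} | v h. v \<in> L \<and> h \<in> VH}"
      using p by blast
    hence "{Inl u, Inr (u,h)} \<in> ?E" unfolding corona_E_def by (rule UnI2)
    moreover have "{Inr (u,h), Inl u} = {Inl u, Inr (u,h)}" by (rule insert_commute)
    ultimately have ed2: "{x, Inl u} \<in> ?E" using p(1) by simp
    have uG: "u \<in> VG" using p(2) L by blast
    have "Inl u \<in> ?W" using uG IW by blast
    from reach_edge[OF x this ed2] have "reach_in ?E ?W x (Inl u)" .
    thus ?thesis using rG[OF uG] by (rule reach_trans)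
  qed
  have vW: "Inl v \<in> ?W" using IW vG by auto
  have "comps ?E ?W = {{w. reach_in ?E ?W (Inl v) w}}"
  proof -
    have "{w. reach_in ?E ?W x w} = {w. reach_in ?E ?W (Inl v) w}" if x: "x \<in> ?W" for x
    proof -
      have a: "reach_in ?E ?W x (Inl v)" by (rule rall[OF x])
      have b: "reach_in ?E ?W (Inl v) x" by (rule reach_sym[OF a])
      show ?thesis using reach_trans[OF a] reach_trans[OF b] by blast
    qed
    thus ?thesis unfolding comps_def using vW by blast
  qed
  thus ?thesis by (simp add: num_comp_comps)
qed

theorem theorem3p9:
  fixes VG :: "'a set" and EG :: "'a set set" and VH :: "'b set" and EH :: "'b set set"
    and L :: "'a set"
  assumes "simple_graph VG EG" and "connected_graph VG EG" and "card VG > 1"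
    and "simple_graph VH EH" and "connected_graph VH EH"
    and "L \<subseteq> VG" and "L \<noteq> {}"
    and "accessible (cutsets (corona_V VG L VH) (corona_E EG L VH EH))"
  shows "accessible (cutsets VH EH)"
proof -
  let ?V = "corona_V VG L VH" and ?E = "corona_E EG L VH EH"
  obtain v where v: "v \<in> L" using assms(7) by blast
  let ?f = "\<lambda>h. Inr (v,h) :: 'a + 'a \<times> 'b"
  let ?X = "\<lambda>S. insert (Inl v) (?f ` S)"
  have finG: "finite VG" using assms(1) unfolding simple_graph_def by simp
  have finH: "finite VH" using assms(4) unfolding simple_graph_def by simp
  define c0 where "c0 = card (comps ?E (?V - {Inl v} - ?f ` VH))"
  have N1: "num_comp ?V ?E (?X S) = c0 + num_comp VH EH S" for S
    unfolding c0_def by (rule K1[OF v finG finH assms(6)])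
  have N2: "num_comp ?V ?E (?f ` S) = 1" for S
    by (rule K2[OF v assms(6) assms(2)])
  have rm1: "?X S - {?f t} = ?X (S - {t})" for S t by auto
  have rm2: "?X S - {Inl v} = ?f ` S" for S by auto
  have Xsub: "S \<subseteq> VH \<Longrightarrow> ?X S \<subseteq> ?V" for S using v assms(6) unfolding corona_V_def by auto
  show ?thesis unfolding accessible_def
  proof (intro ballI impI)
    fix T assume T: "T \<in> cutsets VH EH" "T \<noteq> {}"
    hence TV: "T \<subseteq> VH" and Tc: "\<forall>t\<in>T. num_comp VH EH (T - {t}) < num_comp VH EH T"
      by (auto simp: cutsets_def is_cutset_def)
    obtain t0 where t0: "t0 \<in> T" using T(2) by blast
    have "{w. reach_in EH (VH - (T - {t0})) t0 w} \<in> comps EH (VH - (T - {t0}))"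
      unfolding comps_def using t0 TV by blast
    hence "num_comp VH EH (T - {t0}) \<ge> 1"
      unfolding num_comp_comps using finite_comps[of "VH - (T - {t0})" EH] finH
      by (metis One_nat_def Suc_leI card_gt_0_iff empty_iff finite_Diff)
    hence two: "num_comp VH EH T \<ge> 2" using Tc t0 by fastforce
    have cut: "?X T \<in> cutsets ?V ?E"
      unfolding cutsets_def is_cutset_def
    proof (intro CollectI conjI disjI2 ballI)
      show "?X T \<subseteq> ?V" using Xsub TV .
      fix s assume s: "s \<in> ?X T"
      show "num_comp ?V ?E (?X T - {s}) < num_comp ?V ?E (?X T)"
      proof (cases "s = Inl v")
        case True thus ?thesis using rm2 N1 N2 two by simp
      next
        case False
        then obtain t where t: "t \<in> T" "s = ?f t" using s by auto
        thus ?thesis using rm1 N1 Tc by simp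
      qed
    qed
    have acc: "\<And>U. U \<in> cutsets ?V ?E \<Longrightarrow> U \<noteq> {} \<Longrightarrow> \<exists>t\<in>U. U - {t} \<in> cutsets ?V ?E"
      using assms(8) unfolding accessible_def by blast
    have "\<exists>s\<in>?X T. ?X T - {s} \<in> cutsets ?V ?E"
      by (rule acc[OF cut]) simp
    then obtain s where s: "s \<in> ?X T" "?X T - {s} \<in> cutsets ?V ?E" by (rule bexE)
    show "\<exists>t\<in>T. T - {t} \<in> cutsets VH EH"
    proof (cases "s = Inl v")
      case True
      hence c: "?f ` T \<in> cutsets ?V ?E" using s rm2 by simp
      have "?f t0 \<in> ?f ` T" using t0 by simp
      hence "num_comp ?V ?E (?f ` T - {?f t0}) < num_comp ?V ?E (?f ` T)"
        using c T(2) unfolding cutsets_def is_cutset_def by blast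
      moreover have "?f ` T - {?f t0} = ?f ` (T - {t0})" by auto
      ultimately have False using N2 by simp
      thus ?thesis ..
    next
      case False
      then obtain t where t: "t \<in> T" "s = ?f t" using s by auto
      hence c: "?X (T - {t}) \<in> cutsets ?V ?E" using s rm1 by simp
      have "T - {t} \<in> cutsets VH EH"
        unfolding cutsets_def is_cutset_def
      proof (intro CollectI conjI)
        show "T - {t} \<subseteq> VH" using TV by auto
        show "T - {t} = {} \<or> (\<forall>t'\<in>T - {t}. num_comp VH EH (T - {t} - {t'}) < num_comp VH EH (T - {t}))"
        proof (intro disjI2 ballI)
          fix t' assume t': "t' \<in> T - {t}"
          hence "?f t' \<in> ?X (T - {t})" by simp
          have "num_comp ?V ?E (?X (T - {t}) - {?f t'}) < num_comp ?V ?E (?X (T - {t}))"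
            using c \<open>?f t' \<in> ?X (T - {t})\<close> unfolding cutsets_def is_cutset_def by blast
          thus "num_comp VH EH (T - {t} - {t'}) < num_comp VH EH (T - {t})"
            using rm1 N1 by simp
        qed
      qed
      thus ?thesis using t by blast
    qed
  qed
qed

end
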